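(* Let $W$ be a weighing matrix of order $n$ and weight $k$ with columns $w_1,\dots,w_n$, let $C_i=w_iw_i^T$, and let $L_1,\dots,L_f$ be mutually suitable Latin squares of side $n$ with $L_m=(l_m(i,j))$. Let $\widetilde W_m=(C_{l_m(i,j)})_{i,j=1}^n$ for $m=1,\dots,f$. Define the $n^2\times n^2$ block matrix $W'$ whose $(i,j)$ block is $w_jw_i^T$. Then $W'$ is a weighing matrix of order $n^2$ and weight $k^2$, and $W',\widetilde W_1,\dots,\widetilde W_f$ form a set of $f+1$ mutually unbiased weighing matrices of order $n^2$ and weight $k^2$.
   Context: A weighing matrix of order $n$ and weight $k$ is an $n\times n$ matrix with entries in $\{1,-1,0\}$ such that $WW^T=kI_n$. Two weighing matrices $W_1,W_2$ of order $N$ and weight $K$ are unbiased if $\frac{1}{\sqrt{K}}W_1W_2^T$ is a weighing matrix of order $N$ and weight $K$; mutually unbiased means pairwise unbiased. Two Latin squares $L_1,L_2$ of side $n$ (symbols $\{1,\dots,n\}$) are suitable if for every row $a$ of $L_1$ and row $b$ of $L_2$ there is exactly one column $c$ with $L_1(a,c)=L_2(b,c)$; mutually suitable means pairwise suitable. *)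

theory Defs
  imports Complex_Main
begin

(* Matrices of order N are represented as functions nat => nat => real, only
   the entries with indices < N matter (0-indexed rows/columns). *)

definition weighing :: "nat \<Rightarrow> real \<Rightarrow> (nat \<Rightarrow> nat \<Rightarrow> real) \<Rightarrow> bool" where
  "weighing N K W \<longleftrightarrow>
     (\<forall>i<N. \<forall>j<N. W i j \<in> {1, -1, 0}) \<and>
     (\<forall>i<N. \<forall>j<N. (\<Sum>l<N. W i l * W j l) = (if i = j then K else 0))"

definition mat_mult_T :: "nat \<Rightarrow> (nat \<Rightarrow> nat \<Rightarrow> real) \<Rightarrow> (nat \<Rightarrow> nat \<Rightarrow> real) \<Rightarrow> nat \<Rightarrow> nat \<Rightarrow> real" where
  "mat_mult_T N A B = (\<lambda>i j. \<Sum>l<N. A i l * B j l)"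

definition unbiased :: "nat \<Rightarrow> real \<Rightarrow> (nat \<Rightarrow> nat \<Rightarrow> real) \<Rightarrow> (nat \<Rightarrow> nat \<Rightarrow> real) \<Rightarrow> bool" where
  "unbiased N K W1 W2 \<longleftrightarrow> weighing N K W1 \<and> weighing N K W2 \<and>
     weighing N K (\<lambda>i j. mat_mult_T N W1 W2 i j / sqrt K)"

definition mutually_unbiased :: "nat \<Rightarrow> real \<Rightarrow> nat \<Rightarrow> (nat \<Rightarrow> nat \<Rightarrow> nat \<Rightarrow> real) \<Rightarrow> bool" where
  "mutually_unbiased N K M Ws \<longleftrightarrow>
     (\<forall>p<M. weighing N K (Ws p)) \<and>
     (\<forall>p<M. \<forall>q<M. p \<noteq> q \<longrightarrow> unbiased N K (Ws p) (Ws q))"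

definition latin_square :: "nat \<Rightarrow> (nat \<Rightarrow> nat \<Rightarrow> nat) \<Rightarrow> bool" where
  "latin_square n L \<longleftrightarrow>
     (\<forall>i<n. bij_betw (\<lambda>j. L i j) {..<n} {..<n}) \<and>
     (\<forall>j<n. bij_betw (\<lambda>i. L i j) {..<n} {..<n})"

definition suitable :: "nat \<Rightarrow> (nat \<Rightarrow> nat \<Rightarrow> nat) \<Rightarrow> (nat \<Rightarrow> nat \<Rightarrow> nat) \<Rightarrow> bool" where
  "suitable n L1 L2 \<longleftrightarrow>
     (\<forall>a<n. \<forall>b<n. \<exists>!c. c < n \<and> L1 a c = L2 b c)"

definition mutually_suitable :: "nat \<Rightarrow> nat \<Rightarrow> (nat \<Rightarrow> nat \<Rightarrow> nat \<Rightarrow> nat) \<Rightarrow> bool" where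
  "mutually_suitable n f Ls \<longleftrightarrow>
     (\<forall>m<f. latin_square n (Ls m)) \<and>
     (\<forall>m<f. \<forall>m'<f. m \<noteq> m' \<longrightarrow> suitable n (Ls m) (Ls m'))"

(* W' : block (i,j) is w_j w_i^T, where w_j is the j-th column of W.
   Row index i*n+a, column index j*n+b. *)
definition Wprime :: "nat \<Rightarrow> (nat \<Rightarrow> nat \<Rightarrow> real) \<Rightarrow> nat \<Rightarrow> nat \<Rightarrow> real" where
  "Wprime n W = (\<lambda>r c. let i = r div n; a = r mod n; j = c div n; b = c mod n
                        in W a j * W b i)"

(* C_l = w_l w_l^T ; W~ has block (i,j) equal to C_{L i j} *)
definition Wtilde :: "nat \<Rightarrow> (nat \<Rightarrow> nat \<Rightarrow> real) \<Rightarrow> (nat \<Rightarrow> nat \<Rightarrow> nat) \<Rightarrow> nat \<Rightarrow> nat \<Rightarrow> real" where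
  "Wtilde n W L = (\<lambda>r c. let i = r div n; a = r mod n; j = c div n; b = c mod n
                        in W a (L i j) * W b (L i j))"

end

theory Submission
  imports Defs "Jordan_Normal_Form.Determinant"
begin

lemma sum_sq_split:
  fixes g :: "nat \<Rightarrow> real"
  shows "(\<Sum>l<n*n. g l) = (\<Sum>j<n. \<Sum>b<n. g (j*n+b))"
proof -
  have "(\<Sum>l<n*n. g l) = (\<Sum>j<n. sum g {j*n..<j*n+n})"
    by (simp add: sum.nat_group)
  also have "\<dots> = (\<Sum>j<n. \<Sum>b<n. g (j*n+b))"
  proof (rule sum.cong[OF refl])
    fix j assume "j \<in> {..<n}"
    have "sum g {0+j*n..<n+j*n} = (\<Sum>b=0..<n. g (b+j*n))" by (rule sum.shift_bounds_nat_ivl)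
    thus "sum g {j*n..<j*n+n} = (\<Sum>b<n. g (j*n+b))" by (simp add: lessThan_atLeast0 add.commute)
  qed
  finally show ?thesis .
qed

lemma block_weighing:
  assumes e: "\<forall>i<n. \<forall>a<n. \<forall>j<n. \<forall>b<n. F i a j b \<in> {1,-1,0}"
  and s: "\<forall>i<n. \<forall>a<n. \<forall>i'<n. \<forall>a'<n. (\<Sum>j<n. \<Sum>b<n. F i a j b * F i' a' j b) = (if i=i' \<and> a=a' then K else 0)"
  shows "weighing (n^2) K (\<lambda>r c. F (r div n) (r mod n) (c div n) (c mod n))"
proof (cases "n = 0")
  case True thus ?thesis by (simp add: weighing_def)
next
  case False
  have bd: "r div n < n" "r mod n < n" if "r < n^2" for r
    using that False by (auto simp: power2_eq_square less_mult_imp_div_less)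
  show ?thesis unfolding weighing_def
  proof (intro conjI allI impI)
    fix i j assume "i < n^2" "j < n^2" thus "F (i div n) (i mod n) (j div n) (j mod n) \<in> {1,-1,0}"
      using e bd by blast
  next
    fix i j assume ij: "i < n^2" "j < n^2"
    have "(\<Sum>l<n^2. F (i div n) (i mod n) (l div n) (l mod n) * F (j div n) (j mod n) (l div n) (l mod n))
       = (\<Sum>c<n. \<Sum>b<n. F (i div n) (i mod n) c b * F (j div n) (j mod n) c b)"
      unfolding power2_eq_square sum_sq_split using False by (intro sum.cong refl) auto
    also have "\<dots> = (if i div n = j div n \<and> i mod n = j mod n then K else 0)"
      using s bd ij by blast
    also have "(i div n = j div n \<and> i mod n = j mod n) = (i = j)"
      by (metis div_mult_mod_eq)
    finally show "(\<Sum>l<n^2. F (i div n) (i mod n) (l div n) (l mod n) * F (j div n) (j mod n) (l div n) (l mod n)) = (if i = j then K else 0)" .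
  qed
qed


lemma reindex_perm:
  fixes g :: "nat \<Rightarrow> real"
  assumes "\<forall>h<n. P h < n" "inj_on P {..<n}"
  shows "(\<Sum>h<n. g (P h)) = (\<Sum>l<n. g l)"
proof -
  have im: "P ` {..<n} = {..<n}" by (rule endo_inj_surj) (use assms in auto)
  have "(\<Sum>l<n. g l) = (\<Sum>l\<in>P ` {..<n}. g l)" using im by simp
  also have "\<dots> = (\<Sum>h<n. g (P h))" using assms(2) by (simp add: sum.reindex)
  finally show ?thesis by simp
qed

lemma mult_block:
  "mat_mult_T (n^2) (\<lambda>r c. FA (r div n) (r mod n) (c div n) (c mod n))
      (\<lambda>r c. FB (r div n) (r mod n) (c div n) (c mod n)) r s
   = (\<Sum>j<n. \<Sum>b<n. FA (r div n) (r mod n) j b * FB (s div n) (s mod n) j b)"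
  unfolding mat_mult_T_def power2_eq_square sum_sq_split
  by (intro sum.cong refl) auto

lemma div_k:
  assumes "k = 0 \<Longrightarrow> x = 0"
  shows "(real k * x) / sqrt (real (k^2)) = (x::real)"
  using assms by (cases "k = 0") auto

lemma ent_mult: "(x::real) \<in> {1,-1,0} \<Longrightarrow> y \<in> {1,-1,0} \<Longrightarrow> x * y \<in> {1,-1,0}"
  by auto

lemma wrow: "weighing n K W \<Longrightarrow> i < n \<Longrightarrow> j < n \<Longrightarrow> (\<Sum>l<n. W i l * W j l) = (if i = j then K else 0)"
  unfolding weighing_def by blast

lemma went: "weighing n K W \<Longrightarrow> i < n \<Longrightarrow> j < n \<Longrightarrow> W i j \<in> {1,-1,0}"
  unfolding weighing_def by blast

lemma prime_block:
  assumes wW: "weighing n (real k) W" and wT: "weighing n (real k) (\<lambda>i j. W j i)"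
  shows "\<forall>i<n. \<forall>a<n. \<forall>j<n. \<forall>b<n. W a j * W b i \<in> {1,-1,0}"
    "\<forall>i<n. \<forall>a<n. \<forall>i'<n. \<forall>a'<n. (\<Sum>j<n. \<Sum>b<n. (W a j * W b i) * (W a' j * W b i'))
        = (if i=i' \<and> a=a' then real (k^2) else 0)"
proof -
  show "\<forall>i<n. \<forall>a<n. \<forall>j<n. \<forall>b<n. W a j * W b i \<in> {1,-1,0}"
    by (intro allI impI ent_mult went[OF wW]) auto
  show "\<forall>i<n. \<forall>a<n. \<forall>i'<n. \<forall>a'<n. (\<Sum>j<n. \<Sum>b<n. (W a j * W b i) * (W a' j * W b i'))
        = (if i=i' \<and> a=a' then real (k^2) else 0)"
  proof (intro allI impI)
    fix i a i' a' assume h: "i < n" "a < n" "i' < n" "a' < n"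
    have "(\<Sum>j<n. \<Sum>b<n. (W a j * W b i) * (W a' j * W b i'))
        = (\<Sum>j<n. W a j * W a' j) * (\<Sum>b<n. W b i * W b i')"
      unfolding sum_product by (intro sum.cong refl) (simp add: algebra_simps)
    also have "\<dots> = (if a = a' then real k else 0) * (if i = i' then real k else 0)"
      using wrow[OF wW h(2) h(4)] wrow[OF wT h(1) h(3)] by simp
    finally show "(\<Sum>j<n. \<Sum>b<n. (W a j * W b i) * (W a' j * W b i'))
        = (if i=i' \<and> a=a' then real (k^2) else 0)" by (simp add: power2_eq_square)
  qed
qed

lemma inner_tilde:
  assumes wT: "weighing n (real k) (\<lambda>i j. W j i)"
    and PQ: "\<forall>j<n. P j < n \<and> Q j < n"
  shows "(\<Sum>j<n. \<Sum>b<n. (W a (P j) * W b (P j)) * (W c (Q j) * W b (Q j)))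
    = real k * (\<Sum>j<n. if P j = Q j then W a (P j) * W c (P j) else 0)"
proof -
  have "(\<Sum>j<n. \<Sum>b<n. (W a (P j) * W b (P j)) * (W c (Q j) * W b (Q j)))
      = (\<Sum>j<n. real k * (if P j = Q j then W a (P j) * W c (P j) else 0))"
  proof (rule sum.cong[OF refl])
    fix j assume "j \<in> {..<n}"
    hence j: "P j < n" "Q j < n" using PQ by auto
    have "(\<Sum>b<n. (W a (P j) * W b (P j)) * (W c (Q j) * W b (Q j)))
        = (W a (P j) * W c (Q j)) * (\<Sum>b<n. W b (P j) * W b (Q j))"
      unfolding sum_distrib_left by (intro sum.cong refl) (simp add: algebra_simps)
    also have "\<dots> = (W a (P j) * W c (Q j)) * (if P j = Q j then real k else 0)"
      using wrow[OF wT j] by simp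
    finally show "(\<Sum>b<n. (W a (P j) * W b (P j)) * (W c (Q j) * W b (Q j)))
      = real k * (if P j = Q j then W a (P j) * W c (P j) else 0)" by auto
  qed
  thus ?thesis by (simp add: sum_distrib_left)
qed

lemma tilde_block:
  assumes wW: "weighing n (real k) W" and wT: "weighing n (real k) (\<lambda>i j. W j i)"
    and S1: "\<forall>i<n. \<forall>h<n. S i h < n"
    and S2: "\<forall>i<n. inj_on (S i) {..<n}"
    and S3: "\<forall>i<n. \<forall>i'<n. \<forall>h<n. i \<noteq> i' \<longrightarrow> S i h \<noteq> S i' h"
  shows "\<forall>i<n. \<forall>a<n. \<forall>j<n. \<forall>b<n. W a (S i j) * W b (S i j) \<in> {1,-1,0}"
    "\<forall>i<n. \<forall>a<n. \<forall>i'<n. \<forall>a'<n. (\<Sum>j<n. \<Sum>b<n. (W a (S i j) * W b (S i j)) * (W a' (S i' j) * W b (S i' j)))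
        = (if i=i' \<and> a=a' then real (k^2) else 0)"
proof -
  show "\<forall>i<n. \<forall>a<n. \<forall>j<n. \<forall>b<n. W a (S i j) * W b (S i j) \<in> {1,-1,0}"
    using S1 by (intro allI impI ent_mult went[OF wW]) auto
  show "\<forall>i<n. \<forall>a<n. \<forall>i'<n. \<forall>a'<n. (\<Sum>j<n. \<Sum>b<n. (W a (S i j) * W b (S i j)) * (W a' (S i' j) * W b (S i' j)))
        = (if i=i' \<and> a=a' then real (k^2) else 0)"
  proof (intro allI impI)
    fix i a i' a' assume h: "i < n" "a < n" "i' < n" "a' < n"
    have "(\<Sum>j<n. \<Sum>b<n. (W a (S i j) * W b (S i j)) * (W a' (S i' j) * W b (S i' j)))
      = real k * (\<Sum>j<n. if S i j = S i' j then W a (S i j) * W a' (S i j) else 0)"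
      by (rule inner_tilde[OF wT]) (use S1 h in auto)
    also have "\<dots> = (if i=i' \<and> a=a' then real (k^2) else 0)"
    proof (cases "i = i'")
      case True
      have "(\<Sum>j<n. if S i j = S i' j then W a (S i j) * W a' (S i j) else 0)
          = (\<Sum>j<n. W a (S i j) * W a' (S i j))" using True by simp
      also have "\<dots> = (\<Sum>l<n. W a l * W a' l)"
        by (rule reindex_perm[where g="\<lambda>l. W a l * W a' l"]) (use S1 S2 h in auto)
      also have "\<dots> = (if a = a' then real k else 0)" using wrow[OF wW h(2) h(4)] by simp
      finally show ?thesis using True by (simp add: power2_eq_square)
    next
      case False
      have "(\<Sum>j<n. if S i j = S i' j then W a (S i j) * W a' (S i j) else 0) = 0"
        by (rule sum.neutral) (use S3 h False in auto)
      thus ?thesis using False by simp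
    qed
    finally show "(\<Sum>j<n. \<Sum>b<n. (W a (S i j) * W b (S i j)) * (W a' (S i' j) * W b (S i' j)))
        = (if i=i' \<and> a=a' then real (k^2) else 0)" .
  qed
qed


definition blk :: "nat \<Rightarrow> (nat \<Rightarrow> nat \<Rightarrow> nat \<Rightarrow> nat \<Rightarrow> real) \<Rightarrow> nat \<Rightarrow> nat \<Rightarrow> real" where
  "blk n F = (\<lambda>r c. F (r div n) (r mod n) (c div n) (c mod n))"

definition bconds :: "nat \<Rightarrow> real \<Rightarrow> (nat \<Rightarrow> nat \<Rightarrow> nat \<Rightarrow> nat \<Rightarrow> real) \<Rightarrow> bool" where
  "bconds n K F \<longleftrightarrow> (\<forall>i<n. \<forall>a<n. \<forall>j<n. \<forall>b<n. F i a j b \<in> {1,-1,0}) \<and>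
    (\<forall>i<n. \<forall>a<n. \<forall>i'<n. \<forall>a'<n. (\<Sum>j<n. \<Sum>b<n. F i a j b * F i' a' j b) = (if i=i' \<and> a=a' then K else 0))"

lemma blk_weighing: "bconds n K F \<Longrightarrow> weighing (n^2) K (blk n F)"
  unfolding bconds_def blk_def by (rule block_weighing) auto

lemma blk_mult: "(\<lambda>r s. mat_mult_T (n^2) (blk n FA) (blk n FB) r s / sqrt K)
   = blk n (\<lambda>i a h c. (\<Sum>j<n. \<Sum>b<n. FA i a j b * FB h c j b) / sqrt K)"
  unfolding blk_def by (simp add: mult_block[unfolded blk_def])

lemma bconds_cong:
  assumes "bconds n K G" "\<forall>i<n. \<forall>a<n. \<forall>h<n. \<forall>c<n. F i a h c = G i a h c"
  shows "bconds n K F"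
proof -
  have "(\<Sum>j<n. \<Sum>b<n. F i a j b * F i' a' j b) = (\<Sum>j<n. \<Sum>b<n. G i a j b * G i' a' j b)"
    if "i < n" "a < n" "i' < n" "a' < n" for i a i' a'
    using assms(2) that by (intro sum.cong refl) auto
  thus ?thesis using assms unfolding bconds_def by auto
qed

lemma weighing_zero:
  assumes "weighing N 0 A" "i < N" "j < N" shows "A i j = 0"
proof -
  have "(\<Sum>l<N. A i l * A i l) = 0" using assms unfolding weighing_def by auto
  hence "(\<Sum>l<N. (A i l)^2) = 0" by (simp add: power2_eq_square)
  hence "\<forall>l\<in>{..<N}. (A i l)^2 = 0" by (subst (asm) sum_nonneg_eq_0_iff) auto
  thus ?thesis using assms by auto
qed

lemma latin_facts:
  assumes "latin_square n L"
  shows "\<And>i j. i < n \<Longrightarrow> j < n \<Longrightarrow> L i j < n"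
    "\<And>i. i < n \<Longrightarrow> inj_on (L i) {..<n}"
    "\<And>i. i < n \<Longrightarrow> L i ` {..<n} = {..<n}"
    "\<And>j. j < n \<Longrightarrow> inj_on (\<lambda>i. L i j) {..<n}"
  using assms unfolding latin_square_def bij_betw_def by (auto simp: eta_contract_eq)

lemma prime_tilde:
  assumes wW: "weighing n (real k) W" and wT: "weighing n (real k) (\<lambda>i j. W j i)"
    and lat: "latin_square n L"
  shows "bconds n (real (k^2)) (\<lambda>i a h c. (\<Sum>j<n. \<Sum>b<n. (W a j * W b i) * (W c (L h j) * W b (L h j))) / sqrt (real (k^2)))"
proof -
  note lf = latin_facts[OF lat]
  define J where "J h i = (THE j. j < n \<and> L h j = i)" for h i
  have Jp: "J h i < n \<and> L h (J h i) = i" if "h < n" "i < n" for h i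
  proof -
    have "\<exists>!j. j < n \<and> L h j = i"
    proof -
      have "i \<in> L h ` {..<n}" using lf(3)[OF that(1)] that by auto
      then obtain j where "j < n" "L h j = i" by auto
      moreover have "j' = j" if "j' < n" "L h j' = i" for j'
        using lf(2)[OF \<open>h < n\<close>] that \<open>j < n\<close> \<open>L h j = i\<close> unfolding inj_on_def by auto
      ultimately show ?thesis by blast
    qed
    thus ?thesis unfolding J_def by (rule theI')
  qed
  have Jeq: "(L h j = i) = (j = J h i)" if "h < n" "i < n" "j < n" for h i j
  proof
    assume "L h j = i"
    thus "j = J h i" using lf(2)[OF that(1)] Jp[OF that(1,2)] that unfolding inj_on_def by auto
  qed (use Jp[OF that(1,2)] in auto)
  have Jinj: "inj_on (\<lambda>h. J h i) {..<n}" if "i < n" for i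
  proof (rule inj_onI)
    fix h h' assume "h \<in> {..<n}" "h' \<in> {..<n}" "J h i = J h' i"
    hence "L h (J h i) = L h' (J h i)" using Jp[of h i] Jp[of h' i] that by auto
    thus "h = h'" using lf(4)[of "J h i"] Jp[of h i] \<open>h \<in> {..<n}\<close> \<open>h' \<in> {..<n}\<close> that
      unfolding inj_on_def by auto
  qed
  define X where "X i a h c = W a (J h i) * W c i" for i a h c
  have inner: "(\<Sum>j<n. \<Sum>b<n. (W a j * W b i) * (W c (L h j) * W b (L h j))) = real k * X i a h c"
    if h: "i < n" "a < n" "h < n" "c < n" for i a h c
  proof -
    have "(\<Sum>j<n. \<Sum>b<n. (W a j * W b i) * (W c (L h j) * W b (L h j)))
        = (\<Sum>j<n. if j = J h i then real k * (W a j * W c i) else 0)"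
    proof (rule sum.cong[OF refl])
      fix j assume "j \<in> {..<n}"
      hence j: "j < n" "L h j < n" using lf(1) h by auto
      have "(\<Sum>b<n. (W a j * W b i) * (W c (L h j) * W b (L h j)))
          = (W a j * W c (L h j)) * (\<Sum>b<n. W b i * W b (L h j))"
        unfolding sum_distrib_left by (intro sum.cong refl) (simp add: algebra_simps)
      also have "\<dots> = (W a j * W c (L h j)) * (if i = L h j then real k else 0)"
        using wrow[OF wT h(1) j(2)] by simp
      finally show "(\<Sum>b<n. (W a j * W b i) * (W c (L h j) * W b (L h j)))
          = (if j = J h i then real k * (W a j * W c i) else 0)"
        using Jeq[OF h(3) h(1) j(1)] by auto
    qed
    also have "\<dots> = real k * X i a h c" using Jp[OF h(3) h(1)] by (simp add: X_def)
    finally show ?thesis .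
  qed
  have bX: "bconds n (real (k^2)) X"
    unfolding bconds_def
  proof (intro conjI allI impI)
    fix i a j b assume "i < n" "a < n" "j < n" "b < n"
    thus "X i a j b \<in> {1,-1,0}" unfolding X_def using Jp by (intro ent_mult went[OF wW]) auto
  next
    fix i a i' a' assume h: "i < n" "a < n" "i' < n" "a' < n"
    have "(\<Sum>j<n. \<Sum>b<n. X i a j b * X i' a' j b)
        = (\<Sum>j<n. (W a (J j i) * W a' (J j i')) * (\<Sum>b<n. W b i * W b i'))"
      unfolding X_def sum_distrib_left by (intro sum.cong refl) (simp add: algebra_simps)
    also have "\<dots> = (\<Sum>j<n. (W a (J j i) * W a' (J j i')) * (if i = i' then real k else 0))"
      using wrow[OF wT h(1) h(3)] by simp
    also have "\<dots> = (if i=i' \<and> a=a' then real (k^2) else 0)"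
    proof (cases "i = i'")
      case True
      have "(\<Sum>j<n. W a (J j i) * W a' (J j i)) = (\<Sum>l<n. W a l * W a' l)"
        by (rule reindex_perm[where g="\<lambda>l. W a l * W a' l" and P="\<lambda>j. J j i"]) (use Jp Jinj h in auto)
      also have "\<dots> = (if a = a' then real k else 0)" using wrow[OF wW h(2) h(4)] by simp
      finally show ?thesis using True by (simp add: power2_eq_square sum_distrib_right[symmetric])
    qed simp
    finally show "(\<Sum>j<n. \<Sum>b<n. X i a j b * X i' a' j b) = (if i=i' \<and> a=a' then real (k^2) else 0)" .
  qed
  show ?thesis
  proof (rule bconds_cong[OF bX], intro allI impI)
    fix i a h c assume h: "i < n" "a < n" "h < n" "c < n"
    show "(\<Sum>j<n. \<Sum>b<n. (W a j * W b i) * (W c (L h j) * W b (L h j))) / sqrt (real (k^2)) = X i a h c"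
      unfolding inner[OF h]
    proof (rule div_k)
      assume "k = 0"
      thus "X i a h c = 0" unfolding X_def using weighing_zero[of n W a] wW h Jp[OF h(3) h(1)] by simp
    qed
  qed
qed


lemma t_e1:
  fixes A :: "nat \<Rightarrow> nat \<Rightarrow> real"
  assumes "i < N" "j < N"
  shows "(mat N N (\<lambda>(i,j). A i j) * (c \<cdot>\<^sub>m transpose_mat (mat N N (\<lambda>(i,j). A i j)))) $$ (i,j)
     = c * (\<Sum>l<N. A i l * A j l)"
  using assms by (simp add: scalar_prod_def atLeast0LessThan sum_distrib_left mult_ac)

lemma t_e2:
  fixes A :: "nat \<Rightarrow> nat \<Rightarrow> real"
  assumes "i < N" "j < N"
  shows "((c \<cdot>\<^sub>m transpose_mat (mat N N (\<lambda>(i,j). A i j))) * mat N N (\<lambda>(i,j). A i j)) $$ (i,j)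
     = c * (\<Sum>l<N. A l i * A l j)"
  using assms by (simp add: scalar_prod_def atLeast0LessThan sum_distrib_left mult_ac)


lemma weighing_zero0:
  assumes "weighing N 0 A" "i < N" "j < N" shows "A i j = 0"
proof -
  have "(\<Sum>l<N. A i l * A i l) = 0" using assms unfolding weighing_def by auto
  hence "(\<Sum>l<N. (A i l)^2) = 0" by (simp add: power2_eq_square)
  hence "\<forall>l\<in>{..<N}. (A i l)^2 = 0" by (subst (asm) sum_nonneg_eq_0_iff) auto
  thus ?thesis using assms by auto
qed

lemma weighing_transpose:
  assumes w: "weighing N K A"
  shows "weighing N K (\<lambda>i j. A j i)"
proof (cases "K = 0")
  case True
  have "\<forall>i<N. \<forall>j<N. A j i = 0" using weighing_zero0[of N A] w True by blast
  thus ?thesis unfolding weighing_def using True by simp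
next
  case False
  define M where "M = mat N N (\<lambda>(i,j). A i j)"
  have M: "M \<in> carrier_mat N N" unfolding M_def by simp
  have MT: "(1/K) \<cdot>\<^sub>m transpose_mat M \<in> carrier_mat N N" unfolding M_def by simp
  have "M * ((1/K) \<cdot>\<^sub>m transpose_mat M) = 1\<^sub>m N"
  proof (rule eq_matI)
    fix i j assume ij: "i < dim_row (1\<^sub>m N :: real mat)" "j < dim_col (1\<^sub>m N :: real mat)"
    hence ij': "i < N" "j < N" by simp_all
    have "(M * ((1/K) \<cdot>\<^sub>m transpose_mat M)) $$ (i,j) = (1/K) * (\<Sum>l<N. A i l * A j l)"
      unfolding M_def by (rule t_e1[OF ij'])
    also have "\<dots> = (1/K) * (if i = j then K else 0)" using w ij' unfolding weighing_def by simp
    also have "\<dots> = 1\<^sub>m N $$ (i,j)" using ij' False by simp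
    finally show "(M * ((1/K) \<cdot>\<^sub>m transpose_mat M)) $$ (i,j) = 1\<^sub>m N $$ (i,j)" .
  next
    show "dim_row (M * ((1/K) \<cdot>\<^sub>m transpose_mat M)) = dim_row (1\<^sub>m N :: real mat)" using M by simp
  next
    show "dim_col (M * ((1/K) \<cdot>\<^sub>m transpose_mat M)) = dim_col (1\<^sub>m N :: real mat)" using MT M by simp
  qed
  hence inv: "((1/K) \<cdot>\<^sub>m transpose_mat M) * M = 1\<^sub>m N"
    by (rule mat_mult_left_right_inverse[OF M MT])
  have "\<forall>i<N. \<forall>j<N. (\<Sum>l<N. A l i * A l j) = (if i = j then K else 0)"
  proof (intro allI impI)
    fix i j assume ij: "i < N" "j < N"
    have "(((1/K) \<cdot>\<^sub>m transpose_mat M) * M) $$ (i,j) = (1/K) * (\<Sum>l<N. A l i * A l j)"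
      unfolding M_def by (rule t_e2[OF ij])
    hence "(1/K) * (\<Sum>l<N. A l i * A l j) = (if i = j then 1 else 0)" using inv ij by simp
    thus "(\<Sum>l<N. A l i * A l j) = (if i = j then K else 0)" using False
      by (cases "i = j") (simp_all add: field_simps)
  qed
  moreover have "\<forall>i<N. \<forall>j<N. A j i \<in> {1,-1,0}" using w unfolding weighing_def by blast
  ultimately show ?thesis unfolding weighing_def by blast
qed


lemma tilde_tilde:
  assumes wW: "weighing n (real k) W" and wT: "weighing n (real k) (\<lambda>i j. W j i)"
    and lat: "latin_square n L" and lat': "latin_square n L'" and su: "suitable n L L'"
  shows "bconds n (real (k^2)) (\<lambda>i a h c. (\<Sum>j<n. \<Sum>b<n. (W a (L i j) * W b (L i j)) * (W c (L' h j) * W b (L' h j))) / sqrt (real (k^2)))"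
proof -
  note lf = latin_facts[OF lat] and lf' = latin_facts[OF lat']
  define J where "J i h = (THE j. j < n \<and> L i j = L' h j)" for i h
  have ex1: "\<exists>!j. j < n \<and> L i j = L' h j" if "i < n" "h < n" for i h
    using su that unfolding suitable_def by simp
  have Jp: "J i h < n \<and> L i (J i h) = L' h (J i h)" if "i < n" "h < n" for i h
    unfolding J_def by (rule theI'[OF ex1[OF that]])
  have Jeq: "(L i j = L' h j) = (j = J i h)" if "i < n" "h < n" "j < n" for i h j
  proof
    assume "L i j = L' h j"
    thus "j = J i h" unfolding J_def using the1_equality[OF ex1[OF that(1,2)]] that(3) by simp
  qed (use Jp[OF that(1,2)] in auto)
  define S where "S i h = L i (J i h)" for i h
  have S1: "\<forall>i<n. \<forall>h<n. S i h < n" unfolding S_def using lf(1) Jp by blast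
  have S2: "\<forall>i<n. inj_on (S i) {..<n}"
  proof (intro allI impI inj_onI)
    fix i h h' assume i: "i < n" and h: "h \<in> {..<n}" "h' \<in> {..<n}" and e: "S i h = S i h'"
    have "J i h = J i h'" using e lf(2)[OF i] Jp[OF i, of h] Jp[OF i, of h'] h unfolding S_def inj_on_def by auto
    hence "L' h (J i h) = L' h' (J i h)" using Jp[OF i, of h] Jp[OF i, of h'] h by auto
    thus "h = h'" using lf'(4)[of "J i h"] Jp[OF i, of h] h unfolding inj_on_def by auto
  qed
  have S3: "\<forall>i<n. \<forall>i'<n. \<forall>h<n. i \<noteq> i' \<longrightarrow> S i h \<noteq> S i' h"
  proof (intro allI impI notI)
    fix i i' h assume i: "i < n" "i' < n" "h < n" "i \<noteq> i'" and e: "S i h = S i' h"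
    have "L' h (J i h) = L' h (J i' h)" using e Jp[OF i(1,3)] Jp[OF i(2,3)] unfolding S_def by simp
    hence "J i h = J i' h" using lf'(2)[OF i(3)] Jp[OF i(1,3)] Jp[OF i(2,3)] unfolding inj_on_def by auto
    hence "L i (J i h) = L i' (J i h)" using e unfolding S_def by simp
    thus False using lf(4)[of "J i h"] Jp[OF i(1,3)] i unfolding inj_on_def by auto
  qed
  have bX: "bconds n (real (k^2)) (\<lambda>i a h c. W a (S i h) * W c (S i h))"
    unfolding bconds_def using tilde_block[OF wW wT S1 S2 S3] by simp
  show ?thesis
  proof (rule bconds_cong[OF bX], intro allI impI)
    fix i a h c assume h: "i < n" "a < n" "h < n" "c < n"
    have "(\<Sum>j<n. \<Sum>b<n. (W a (L i j) * W b (L i j)) * (W c (L' h j) * W b (L' h j)))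
        = real k * (\<Sum>j<n. if L i j = L' h j then W a (L i j) * W c (L i j) else 0)"
      by (rule inner_tilde[OF wT]) (use lf(1) lf'(1) h in auto)
    also have "(\<Sum>j<n. if L i j = L' h j then W a (L i j) * W c (L i j) else 0)
        = (\<Sum>j<n. if j = J i h then W a (L i j) * W c (L i j) else 0)"
      using Jeq[OF h(1) h(3)] by (intro sum.cong refl) auto
    also have "\<dots> = W a (S i h) * W c (S i h)" using Jp[OF h(1) h(3)] by (simp add: S_def)
    finally show "(\<Sum>j<n. \<Sum>b<n. (W a (L i j) * W b (L i j)) * (W c (L' h j) * W b (L' h j))) / sqrt (real (k^2))
      = W a (S i h) * W c (S i h)"
      by (simp only:) (rule div_k, use weighing_zero[of n W a] weighing_zero[of n W c] wW h S1 in simp)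
  qed
qed


lemma mmT_swap: "mat_mult_T N B A = (\<lambda>i j. mat_mult_T N A B j i)"
  by (simp add: mat_mult_T_def mult.commute fun_eq_iff)

theorem mainTheorem4:
  fixes n k f :: nat and W :: "nat \<Rightarrow> nat \<Rightarrow> real" and Ls :: "nat \<Rightarrow> nat \<Rightarrow> nat \<Rightarrow> nat"
  assumes "weighing n (real k) W"
    and "mutually_suitable n f Ls"
  shows "weighing (n^2) (real (k^2)) (Wprime n W)
    \<and> mutually_unbiased (n^2) (real (k^2)) (f + 1)
        (\<lambda>p. if p = 0 then Wprime n W else Wtilde n W (Ls (p - 1)))"
proof -
  note wW = assms(1)
  have wT: "weighing n (real k) (\<lambda>i j. W j i)" by (rule weighing_transpose[OF wW])
  define FP where "FP = (\<lambda>i a j b. W a j * W b i)"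
  define FT where "FT L = (\<lambda>i a j (b::nat). W a (L i j) * W b (L i j))" for L :: "nat \<Rightarrow> nat \<Rightarrow> nat"
  have P: "Wprime n W = blk n FP" by (simp add: Wprime_def blk_def FP_def fun_eq_iff Let_def)
  have T: "Wtilde n W L = blk n (FT L)" for L by (simp add: Wtilde_def blk_def FT_def fun_eq_iff Let_def)
  have lat: "latin_square n (Ls m)" if "m < f" for m using assms(2) that unfolding mutually_suitable_def by blast
  have sui: "suitable n (Ls m) (Ls m')" if "m < f" "m' < f" "m \<noteq> m'" for m m'
    using assms(2) that unfolding mutually_suitable_def by blast
  have wP: "weighing (n^2) (real (k^2)) (Wprime n W)"
    unfolding P
  proof (rule blk_weighing)
    show "bconds n (real (k^2)) FP" unfolding bconds_def FP_def
      by (rule conjI) (rule prime_block[OF wW wT])+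
  qed
  have wTl: "weighing (n^2) (real (k^2)) (Wtilde n W (Ls m))" if "m < f" for m
  proof -
    note lf = latin_facts[OF lat[OF that]]
    have "bconds n (real (k^2)) (FT (Ls m))"
      unfolding bconds_def FT_def
    proof (rule conjI)
      have S1: "\<forall>i<n. \<forall>h<n. Ls m i h < n" using lf(1) by blast
      have S2: "\<forall>i<n. inj_on (Ls m i) {..<n}" using lf(2) by blast
      have S3: "\<forall>i<n. \<forall>i'<n. \<forall>h<n. i \<noteq> i' \<longrightarrow> Ls m i h \<noteq> Ls m i' h"
        using lf(4) unfolding inj_on_def by blast
      note tb = tilde_block[OF wW wT S1 S2 S3]
      show "\<forall>i<n. \<forall>a<n. \<forall>j<n. \<forall>b<n. W a (Ls m i j) * W b (Ls m i j) \<in> {1, - 1, 0}" by (rule tb(1))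
      show "\<forall>i<n. \<forall>a<n. \<forall>i'<n. \<forall>a'<n. (\<Sum>j<n. \<Sum>b<n. W a (Ls m i j) * W b (Ls m i j) * (W a' (Ls m i' j) * W b (Ls m i' j))) = (if i = i' \<and> a = a' then real (k^2) else 0)"
        by (rule tb(2))
    qed
    thus ?thesis unfolding T by (rule blk_weighing)
  qed
  have uPT: "unbiased (n^2) (real (k^2)) (Wprime n W) (Wtilde n W (Ls m))" if "m < f" for m
  proof -
    have "weighing (n^2) (real (k^2)) (\<lambda>i j. mat_mult_T (n^2) (Wprime n W) (Wtilde n W (Ls m)) i j / sqrt (real (k^2)))"
      unfolding P T blk_mult FP_def FT_def by (intro blk_weighing prime_tilde[OF wW wT lat[OF that]])
    thus ?thesis unfolding unbiased_def using wP wTl[OF that] by blast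
  qed
  have uTP: "unbiased (n^2) (real (k^2)) (Wtilde n W (Ls m)) (Wprime n W)" if "m < f" for m
  proof -
    have "weighing (n^2) (real (k^2)) (\<lambda>i j. mat_mult_T (n^2) (Wprime n W) (Wtilde n W (Ls m)) i j / sqrt (real (k^2)))"
      using uPT[OF that] unfolding unbiased_def by blast
    hence "weighing (n^2) (real (k^2)) (\<lambda>i j. mat_mult_T (n^2) (Wtilde n W (Ls m)) (Wprime n W) i j / sqrt (real (k^2)))"
      unfolding mmT_swap[of "n^2" "Wtilde n W (Ls m)"] by (rule weighing_transpose)
    thus ?thesis unfolding unbiased_def using wP wTl[OF that] by blast
  qed
  have uTT: "unbiased (n^2) (real (k^2)) (Wtilde n W (Ls m)) (Wtilde n W (Ls m'))" if "m < f" "m' < f" "m \<noteq> m'" for m m'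
  proof -
    have "weighing (n^2) (real (k^2)) (\<lambda>i j. mat_mult_T (n^2) (Wtilde n W (Ls m)) (Wtilde n W (Ls m')) i j / sqrt (real (k^2)))"
      unfolding T blk_mult FT_def by (intro blk_weighing tilde_tilde[OF wW wT lat[OF that(1)] lat[OF that(2)] sui[OF that]])
    thus ?thesis unfolding unbiased_def using wTl that by blast
  qed
  have mu: "mutually_unbiased (n^2) (real (k^2)) (f + 1)
        (\<lambda>p. if p = 0 then Wprime n W else Wtilde n W (Ls (p - 1)))"
    unfolding mutually_unbiased_def
  proof (intro conjI allI impI)
    fix p assume "p < f + 1"
    thus "weighing (n^2) (real (k^2)) (if p = 0 then Wprime n W else Wtilde n W (Ls (p - 1)))"
      using wP wTl[of "p - 1"] by auto
  next
    fix p q assume pq: "p < f + 1" "q < f + 1" "p \<noteq> q"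
    show "unbiased (n^2) (real (k^2)) (if p = 0 then Wprime n W else Wtilde n W (Ls (p - 1)))
        (if q = 0 then Wprime n W else Wtilde n W (Ls (q - 1)))"
    proof (cases "p = 0")
      case True
      thus ?thesis using pq uPT[of "q - 1"] by auto
    next
      case False
      show ?thesis
      proof (cases "q = 0")
        case True
        thus ?thesis using pq False uTP[of "p - 1"] by auto
      next
        case False
        thus ?thesis using pq \<open>p \<noteq> 0\<close> uTT[of "p - 1" "q - 1"] by auto
      qed
    qed
  qed
  show ?thesis using wP mu by blast
qed

end
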